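(* Let $E$ be finite, $X_+=E^{\mathbb{Z}_+}$, $X=E^{\mathbb{Z}}$, and let $\phi\in C(X_+)$ be such that there exists a translation-invariant uniformly absolutely convergent interaction $\Phi$ on $\mathbb{Z}$ with $\phi=-\sum_{0\in V\Subset\mathbb{Z}_+}\Phi_V$. Then $\phi$ satisfies the extensibility condition, and $\overset{\rightleftharpoons}{\gamma}^{\phi}=\gamma^{\Phi}$.
   Context: An interaction is a family $\Phi=(\Phi_\Lambda)_{\Lambda\Subset\mathbb{Z}}$ of functions on $X$ with $\Phi_\Lambda$ depending only on coordinates in $\Lambda$; it is uniformly absolutely convergent (UAC) if $\sup_i\sum_{V\ni i}\|\Phi_V\|_\infty<\infty$, and translation-invariant if $\Phi_{\Lambda+k}=\Phi_\Lambda\circ S^k$ ($S$ the left shift). Its Gibbsian specification is $\gamma^\Phi_\Lambda(\omega_\Lambda|\eta_{\Lambda^c})=e^{-H^\Phi_\Lambda(\omega_\Lambda\eta_{\Lambda^c})}/\sum_{\bar\omega_\Lambda}e^{-H^\Phi_\Lambda(\bar\omega_\Lambda\eta_{\Lambda^c})}$ with $H^\Phi_\Lambda=\sum_{V\cap\Lambda\ne\emptyset}\Phi_V$. $S_n\phi=\sum_{k=0}^{n-1}\phi\circ S^k$; strings like $x_{-n}^{-1}ax_1^\infty$ are viewed in $X_+$ by re-indexing the first coordinate as $0$. Extensibility condition: for all $a_0,b_0\in E$, $\sum_{i=0}^n(\phi(x_{-i}^{-1}b_0x_1^\infty)-\phi(x_{-i}^{-1}a_0x_1^\infty))$ converges uniformly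 in $x\in X$. For extensible $\phi$, $\overset{\rightleftharpoons}{\gamma}^{\phi}$ is the unique translation-invariant quasilocal non-null specification on $X$ with single-site kernels $\lim_{p\to\infty}e^{S_{i+p+1}\phi(\omega_{-p}^{i-1}\sigma_i\omega_{i+1}^\infty)}/\sum_{\bar\omega_i}e^{S_{i+p+1}\phi(\omega_{-p}^{i-1}\bar\omega_i\omega_{i+1}^\infty)}$. *)

theory Defs
  imports "HOL-Analysis.Analysis"
begin

(* Configuration spaces: X = E^Z is  int => 'e,  X_+ = E^{Z_+} is  nat => 'e,
   E is a finite type 'e.  Both carry the product of discrete topologies. *)

definition prodtop_pos :: "(nat \<Rightarrow> 'e) topology" where
  "prodtop_pos = product_topology (\<lambda>_. discrete_topology UNIV) UNIV"

definition prodtop :: "(int \<Rightarrow> 'e) topology" where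
  "prodtop = product_topology (\<lambda>_. discrete_topology UNIV) UNIV"

definition shiftZ :: "int \<Rightarrow> (int \<Rightarrow> 'e) \<Rightarrow> (int \<Rightarrow> 'e)" where
  "shiftZ k x = (\<lambda>i. x (i + k))"

definition shiftN :: "nat \<Rightarrow> (nat \<Rightarrow> 'e) \<Rightarrow> (nat \<Rightarrow> 'e)" where
  "shiftN k y = (\<lambda>n. y (n + k))"

definition Ssum :: "((nat \<Rightarrow> 'e) \<Rightarrow> real) \<Rightarrow> nat \<Rightarrow> (nat \<Rightarrow> 'e) \<Rightarrow> real" where
  "Ssum phi n y = (\<Sum>k<n. phi (shiftN k y))"

definition supnorm :: "('a \<Rightarrow> real) \<Rightarrow> real" where
  "supnorm f = (SUP x. \<bar>f x\<bar>)"

definition is_interaction :: "(int set \<Rightarrow> (int \<Rightarrow> 'e) \<Rightarrow> real) \<Rightarrow> bool" where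
  "is_interaction Phi \<longleftrightarrow>
     (\<forall>V x y. finite V \<longrightarrow> (\<forall>i\<in>V. x i = y i) \<longrightarrow> Phi V x = Phi V y)"

definition uac :: "(int set \<Rightarrow> (int \<Rightarrow> 'e) \<Rightarrow> real) \<Rightarrow> bool" where
  "uac Phi \<longleftrightarrow> (\<exists>C. \<forall>i.
      (\<lambda>V. supnorm (Phi V)) summable_on {V. finite V \<and> i \<in> V} \<and>
      (\<Sum>\<^sub>\<infinity>V\<in>{V. finite V \<and> i \<in> V}. supnorm (Phi V)) \<le> C)"

definition trans_inv_interaction :: "(int set \<Rightarrow> (int \<Rightarrow> 'e) \<Rightarrow> real) \<Rightarrow> bool" where
  "trans_inv_interaction Phi \<longleftrightarrow>
     (\<forall>L k. finite L \<longrightarrow> Phi ((\<lambda>i. i + k) ` L) = (\<lambda>x. Phi L (shiftZ k x)))"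

definition splice :: "int set \<Rightarrow> (int \<Rightarrow> 'e) \<Rightarrow> (int \<Rightarrow> 'e) \<Rightarrow> (int \<Rightarrow> 'e)" where
  "splice L w e = (\<lambda>j. if j \<in> L then w j else e j)"

definition hamiltonian :: "(int set \<Rightarrow> (int \<Rightarrow> 'e) \<Rightarrow> real) \<Rightarrow> int set \<Rightarrow> (int \<Rightarrow> 'e) \<Rightarrow> real" where
  "hamiltonian Phi L x = (\<Sum>\<^sub>\<infinity>V\<in>{V. finite V \<and> V \<inter> L \<noteq> {}}. Phi V x)"

(* A specification is represented by its point probabilities:
   gam L w e = gamma_Lambda(omega_Lambda | eta_{Lambda^c})  (E finite);
   convention: value 0 for infinite Lambda. *)
definition gibbs_spec :: "(int set \<Rightarrow> (int \<Rightarrow> 'e) \<Rightarrow> real) \<Rightarrow> int set \<Rightarrow> (int \<Rightarrow> 'e) \<Rightarrow> (int \<Rightarrow> 'e) \<Rightarrow> real" where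
  "gibbs_spec Phi L w e =
     (if finite L then
        exp (- hamiltonian Phi L (splice L w e)) /
        (\<Sum>xi\<in>PiE L (\<lambda>_. UNIV). exp (- hamiltonian Phi L (splice L xi e)))
      else 0)"

definition is_spec :: "(int set \<Rightarrow> (int \<Rightarrow> 'e) \<Rightarrow> (int \<Rightarrow> 'e) \<Rightarrow> real) \<Rightarrow> bool" where
  "is_spec gam \<longleftrightarrow>
     (\<forall>L w e. infinite L \<longrightarrow> gam L w e = 0) \<and>
     (\<forall>L w w' e e'. finite L \<longrightarrow> (\<forall>j\<in>L. w j = w' j) \<longrightarrow> (\<forall>j. j \<notin> L \<longrightarrow> e j = e' j)
        \<longrightarrow> gam L w e = gam L w' e') \<and>
     (\<forall>L w e. finite L \<longrightarrow> gam L w e \<ge> 0) \<and>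
     (\<forall>L e. finite L \<longrightarrow> (\<Sum>xi\<in>PiE L (\<lambda>_. UNIV). gam L xi e) = 1) \<and>
     (\<forall>L D w e. finite D \<longrightarrow> L \<subseteq> D \<longrightarrow>
        gam D w e = (\<Sum>xi\<in>PiE L (\<lambda>_. UNIV). gam D (splice L xi w) e * gam L w (splice D w e)))"

definition quasilocal_spec :: "(int set \<Rightarrow> (int \<Rightarrow> 'e) \<Rightarrow> (int \<Rightarrow> 'e) \<Rightarrow> real) \<Rightarrow> bool" where
  "quasilocal_spec gam \<longleftrightarrow>
     (\<forall>L w. finite L \<longrightarrow> continuous_map prodtop euclideanreal (\<lambda>e. gam L w e))"

definition nonnull_spec :: "(int set \<Rightarrow> (int \<Rightarrow> 'e) \<Rightarrow> (int \<Rightarrow> 'e) \<Rightarrow> real) \<Rightarrow> bool" where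
  "nonnull_spec gam \<longleftrightarrow> (\<forall>L w e. finite L \<longrightarrow> gam L w e > 0)"

definition trans_inv_spec :: "(int set \<Rightarrow> (int \<Rightarrow> 'e) \<Rightarrow> (int \<Rightarrow> 'e) \<Rightarrow> real) \<Rightarrow> bool" where
  "trans_inv_spec gam \<longleftrightarrow>
     (\<forall>L k w e. finite L \<longrightarrow> gam ((\<lambda>i. i + k) ` L) w e = gam L (shiftZ k w) (shiftZ k e))"

(* the string x_{-i}^{-1} a x_1^infty viewed in X_+ (first coordinate re-indexed as 0) *)
definition ins_str :: "(int \<Rightarrow> 'e) \<Rightarrow> nat \<Rightarrow> 'e \<Rightarrow> (nat \<Rightarrow> 'e)" where
  "ins_str x i a = (\<lambda>n. if n = i then a else x (int n - int i))"

(* the string omega_{-p}^infty viewed in X_+ *)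
definition window :: "(int \<Rightarrow> 'e) \<Rightarrow> nat \<Rightarrow> (nat \<Rightarrow> 'e)" where
  "window w p = (\<lambda>n. w (int n - int p))"

definition extensible :: "((nat \<Rightarrow> 'e) \<Rightarrow> real) \<Rightarrow> bool" where
  "extensible phi \<longleftrightarrow>
     (\<forall>a0 b0. uniformly_convergent_on (UNIV :: (int \<Rightarrow> 'e) set)
        (\<lambda>n x. \<Sum>i\<le>n. phi (ins_str x i b0) - phi (ins_str x i a0)))"

definition ss_approx :: "((nat \<Rightarrow> 'e) \<Rightarrow> real) \<Rightarrow> int \<Rightarrow> 'e \<Rightarrow> (int \<Rightarrow> 'e) \<Rightarrow> nat \<Rightarrow> real" where
  "ss_approx phi i s w p =
     exp (Ssum phi (nat (i + int p + 1)) (window (w(i := s)) p)) /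
     (\<Sum>s'\<in>UNIV. exp (Ssum phi (nat (i + int p + 1)) (window (w(i := s')) p)))"

definition rev_spec :: "((nat \<Rightarrow> 'e::finite) \<Rightarrow> real) \<Rightarrow> int set \<Rightarrow> (int \<Rightarrow> 'e) \<Rightarrow> (int \<Rightarrow> 'e) \<Rightarrow> real" where
  "rev_spec phi = (THE gam. is_spec gam \<and> quasilocal_spec gam \<and> nonnull_spec gam \<and> trans_inv_spec gam \<and>
       (\<forall>i w e. (ss_approx phi i (w i) e \<longlongrightarrow> gam {i} w e) sequentially))"

end

theory Submission
  imports Defs
begin

definition Aset :: "int set \<Rightarrow> int set set" where
  "Aset L = {V. finite V \<and> V \<inter> L \<noteq> {}}"

lemma splice_restrict[simp]: "splice L (restrict f L) e = splice L f e"
  by (auto simp: splice_def fun_eq_iff)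

lemma tail_approx:
  fixes f :: "'a \<Rightarrow> real"
  assumes "f summable_on A" "\<And>x. x \<in> A \<Longrightarrow> f x \<ge> 0" "\<epsilon> > 0"
  shows "\<exists>F. finite F \<and> F \<subseteq> A \<and> (\<forall>B. B \<subseteq> A - F \<longrightarrow> infsum f B \<le> \<epsilon>)"
proof -
  obtain F where F: "finite F" "F \<subseteq> A" "dist (sum f F) (infsum f A) \<le> \<epsilon>"
    using infsum_finite_approximation[OF assms(1) assms(3)] by blast
  have s: "f summable_on (A - F)" using assms(1) summable_on_subset_banach by blast
  have "infsum f A = infsum f (F \<union> (A - F))" using F(2) by (simp add: Un_absorb1)
  also have "\<dots> = sum f F + infsum f (A - F)"
    by (subst infsum_Un_disjoint) (use F s in auto)
  finally have e: "infsum f (A - F) \<le> \<epsilon>" using F(3) by (simp add: dist_real_def)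
  show ?thesis
  proof (intro exI conjI allI impI)
    fix B assume B: "B \<subseteq> A - F"
    have "infsum f B \<le> infsum f (A - F)"
      by (rule infsum_mono_neutral) (use B s summable_on_subset_banach assms(2) in auto)
    then show "infsum f B \<le> \<epsilon>" using e by simp
  qed (use F in auto)
qed

lemma cont_approx:
  fixes f :: "(int \<Rightarrow> 'e) \<Rightarrow> real"
  assumes "\<And>\<epsilon>. \<epsilon> > 0 \<Longrightarrow> \<exists>N. finite N \<and> (\<forall>x y. (\<forall>i\<in>N. x i = y i) \<longrightarrow> \<bar>f x - f y\<bar> \<le> \<epsilon>)"
  shows "continuous_map prodtop euclideanreal f"
  unfolding continuous_map_atin limitin_canonical_iff
proof (intro ballI)
  fix x assume "x \<in> topspace (prodtop :: (int \<Rightarrow> 'e) topology)"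
  show "(f \<longlongrightarrow> f x) (atin prodtop x)"
  proof (rule tendstoI)
    fix \<epsilon> :: real assume "\<epsilon> > 0"
    then obtain N where N: "finite N" "\<And>x y. (\<forall>i\<in>N. x i = y i) \<Longrightarrow> \<bar>f x - f y\<bar> \<le> \<epsilon>/2"
      using assms[of "\<epsilon>/2"] by auto
    define U where "U = {y. \<forall>i\<in>N. y i = x i}"
    have "openin prodtop U"
      unfolding prodtop_def openin_product_topology_alt
    proof (intro ballI)
      fix y assume "y \<in> U"
      show "\<exists>U'. finite {i \<in> UNIV. U' i \<noteq> topspace (discrete_topology UNIV)} \<and>
               (\<forall>i\<in>UNIV. openin (discrete_topology UNIV) (U' i)) \<and> y \<in> Pi\<^sub>E UNIV U' \<and> Pi\<^sub>E UNIV U' \<subseteq> U"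
      proof (rule exI[of _ "\<lambda>i. if i \<in> N then {x i} else UNIV"], intro conjI)
        show "finite {i \<in> UNIV. (if i \<in> N then {x i} else UNIV) \<noteq> topspace (discrete_topology UNIV)}"
          by (rule finite_subset[OF _ N(1)]) auto
        show "Pi\<^sub>E UNIV (\<lambda>i. if i \<in> N then {x i} else UNIV) \<subseteq> U"
          by (auto simp: U_def PiE_UNIV_domain Pi_iff) (metis singletonD)
      qed (use \<open>y \<in> U\<close> in \<open>auto simp: U_def PiE_UNIV_domain\<close>)
    qed
    moreover have "x \<in> U" by (simp add: U_def)
    moreover have "\<forall>y\<in>U - {x}. dist (f y) (f x) < \<epsilon>"
      using N(2) \<open>\<epsilon> > 0\<close> by (fastforce simp: U_def dist_real_def)
    ultimately show "\<forall>\<^sub>F y in atin prodtop x. dist (f y) (f x) < \<epsilon>"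
      unfolding eventually_atin by blast
  qed
qed

locale gs =
  fixes Phi :: "int set \<Rightarrow> (int \<Rightarrow> 'e::finite) \<Rightarrow> real"
  assumes inter: "is_interaction Phi" and uacP: "uac Phi" and tinv: "trans_inv_interaction Phi"
begin

lemma Phi_cong: "finite V \<Longrightarrow> (\<And>i. i \<in> V \<Longrightarrow> x i = y i) \<Longrightarrow> Phi V x = Phi V y"
  using inter unfolding is_interaction_def by blast

lemma Phi_shift: "finite L \<Longrightarrow> Phi ((\<lambda>i. i + k) ` L) x = Phi L (shiftZ k x)"
  using tinv unfolding trans_inv_interaction_def by metis

lemma Phi_bound:
  assumes "finite V" shows "\<bar>Phi V x\<bar> \<le> supnorm (Phi V)"
proof -
  have "range (Phi V) \<subseteq> Phi V ` PiE V (\<lambda>_. UNIV)"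
  proof
    fix z assume "z \<in> range (Phi V)"
    then obtain y where "z = Phi V y" by auto
    moreover have "Phi V y = Phi V (restrict y V)" by (rule Phi_cong[OF assms]) auto
    ultimately show "z \<in> Phi V ` PiE V (\<lambda>_. UNIV)" by auto
  qed
  then have "finite (range (Phi V))" by (rule finite_subset) (simp add: assms finite_PiE)
  then have "finite ((\<lambda>y. \<bar>Phi V y\<bar>) ` UNIV)"
    by (metis finite_imageI image_image)
  then show ?thesis unfolding supnorm_def
    by (intro cSUP_upper) (auto intro: bdd_above_finite)
qed

lemma supnorm_nonneg: "finite V \<Longrightarrow> supnorm (Phi V) \<ge> 0"
  using Phi_bound[of V undefined] by linarith

lemma summable_sup_single: "(\<lambda>V. supnorm (Phi V)) summable_on Aset {i}"
proof -
  have "Aset {i} = {V. finite V \<and> i \<in> V}" by (auto simp: Aset_def)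
  then show ?thesis using uacP unfolding uac_def by auto
qed

lemma summable_sup: "finite L \<Longrightarrow> (\<lambda>V. supnorm (Phi V)) summable_on Aset L"
proof (induction L rule: finite_induct)
  case empty then show ?case by (simp add: Aset_def)
next
  case (insert i L)
  have "Aset (insert i L) = Aset {i} \<union> Aset L" by (auto simp: Aset_def)
  then show ?case using insert summable_sup_single summable_on_union by metis
qed

lemma summable_sup_sub: "finite L \<Longrightarrow> B \<subseteq> Aset L \<Longrightarrow> (\<lambda>V. supnorm (Phi V)) summable_on B"
  using summable_sup summable_on_subset_banach by blast

lemma summable_Phi: "finite L \<Longrightarrow> B \<subseteq> Aset L \<Longrightarrow> (\<lambda>V. Phi V x) summable_on B"
proof -
  assume a: "finite L" "B \<subseteq> Aset L"
  have "(\<lambda>V. norm (Phi V x)) summable_on B"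
    by (rule summable_on_comparison_test[OF summable_sup_sub[OF a]])
       (use a Phi_bound in \<open>auto simp: Aset_def\<close>)
  then show ?thesis using summable_on_iff_abs_summable_on_real by blast
qed

lemma bound_Phi: "finite L \<Longrightarrow> B \<subseteq> Aset L \<Longrightarrow> \<bar>infsum (\<lambda>V. Phi V x) B\<bar> \<le> infsum (\<lambda>V. supnorm (Phi V)) B"
proof -
  assume a: "finite L" "B \<subseteq> Aset L"
  show ?thesis
    using norm_infsum_le[OF has_sum_infsum[OF summable_Phi[OF a, of x]] has_sum_infsum[OF summable_sup_sub[OF a]]]
      Phi_bound a by (force simp: Aset_def)
qed


lemma ham_eq: "hamiltonian Phi L x = infsum (\<lambda>V. Phi V x) (Aset L)"
  by (simp add: hamiltonian_def Aset_def)

lemma Aset_mono: "L \<subseteq> D \<Longrightarrow> Aset L \<subseteq> Aset D"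
  by (auto simp: Aset_def)

lemma ham_split:
  assumes "finite D" "L \<subseteq> D"
  shows "hamiltonian Phi D x = hamiltonian Phi L x + infsum (\<lambda>V. Phi V x) (Aset D - Aset L)"
proof -
  have "Aset D = Aset L \<union> (Aset D - Aset L)" using Aset_mono[OF assms(2)] by blast
  then have "hamiltonian Phi D x = infsum (\<lambda>V. Phi V x) (Aset L \<union> (Aset D - Aset L))"
    by (simp add: ham_eq)
  also have "\<dots> = hamiltonian Phi L x + infsum (\<lambda>V. Phi V x) (Aset D - Aset L)"
    by (subst infsum_Un_disjoint)
       (use assms Aset_mono[OF assms(2)] in \<open>auto intro!: summable_Phi[of D] simp: ham_eq\<close>)
  finally show ?thesis .
qed

lemma R_indep:
  assumes "L \<subseteq> D"
  shows "infsum (\<lambda>V. Phi V (splice L xi x)) (Aset D - Aset L) = infsum (\<lambda>V. Phi V x) (Aset D - Aset L)"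
  by (rule infsum_cong, rule Phi_cong) (auto simp: Aset_def splice_def)

lemma ham_approx:
  assumes "finite L" "\<epsilon> > 0"
  shows "\<exists>N. finite N \<and> (\<forall>x y. (\<forall>i\<in>N. x i = y i) \<longrightarrow> \<bar>hamiltonian Phi L x - hamiltonian Phi L y\<bar> \<le> \<epsilon>)"
proof -
  obtain F where F: "finite F" "F \<subseteq> Aset L" "\<And>B. B \<subseteq> Aset L - F \<Longrightarrow> infsum (\<lambda>V. supnorm (Phi V)) B \<le> \<epsilon>/2"
    using tail_approx[OF summable_sup[OF assms(1)], of "\<epsilon>/2"] assms supnorm_nonneg
    by (auto simp: Aset_def)
  have dec: "hamiltonian Phi L x = sum (\<lambda>V. Phi V x) F + infsum (\<lambda>V. Phi V x) (Aset L - F)" for x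
  proof -
    have "Aset L = F \<union> (Aset L - F)" using F by blast
    then have "hamiltonian Phi L x = infsum (\<lambda>V. Phi V x) (F \<union> (Aset L - F))" by (simp add: ham_eq)
    also have "\<dots> = sum (\<lambda>V. Phi V x) F + infsum (\<lambda>V. Phi V x) (Aset L - F)"
      by (subst infsum_Un_disjoint) (use F assms in \<open>auto intro!: summable_Phi[of L]\<close>)
    finally show ?thesis .
  qed
  have bd: "\<bar>infsum (\<lambda>V. Phi V x) (Aset L - F)\<bar> \<le> \<epsilon>/2" for x
    using bound_Phi[OF assms(1), of "Aset L - F" x] F(3)[of "Aset L - F"] by auto
  show ?thesis
  proof (intro exI conjI allI impI)
    show "finite (\<Union>F)" using F by (auto simp: Aset_def)
    fix x y :: "int \<Rightarrow> 'e" assume a: "\<forall>i\<in>\<Union>F. x i = y i"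
    have "sum (\<lambda>V. Phi V x) F = sum (\<lambda>V. Phi V y) F"
      by (rule sum.cong[OF refl], rule Phi_cong) (use F a in \<open>auto simp: Aset_def\<close>)
    then show "\<bar>hamiltonian Phi L x - hamiltonian Phi L y\<bar> \<le> \<epsilon>"
      using dec[of x] dec[of y] bd[of x] bd[of y] by linarith
  qed
qed

definition Zf :: "int set \<Rightarrow> (int \<Rightarrow> 'e) \<Rightarrow> real" where
  "Zf L e = (\<Sum>xi\<in>PiE L (\<lambda>_. UNIV). exp (- hamiltonian Phi L (splice L xi e)))"

lemma Zf_pos: "finite L \<Longrightarrow> Zf L e > 0"
  unfolding Zf_def
  by (rule sum_pos) (auto simp: finite_PiE PiE_eq_empty_iff)

lemma gibbs_eq: "finite L \<Longrightarrow> gibbs_spec Phi L w e = exp (- hamiltonian Phi L (splice L w e)) / Zf L e"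
  by (simp add: gibbs_spec_def Zf_def)

lemma gibbs_pos: "finite L \<Longrightarrow> gibbs_spec Phi L w e > 0"
  using Zf_pos by (simp add: gibbs_eq)

lemma splice_splice1: "L \<subseteq> D \<Longrightarrow> splice D (splice L xi w) e = splice L xi (splice D w e)"
  by (auto simp: splice_def fun_eq_iff)

lemma splice_splice2: "L \<subseteq> D \<Longrightarrow> splice L w (splice D w e) = splice D w e"
  by (auto simp: splice_def fun_eq_iff)

lemma gibbs_consistent:
  assumes "finite D" "L \<subseteq> D"
  shows "gibbs_spec Phi D w e = (\<Sum>xi\<in>PiE L (\<lambda>_. UNIV). gibbs_spec Phi D (splice L xi w) e * gibbs_spec Phi L w (splice D w e))"
proof -
  have fL: "finite L" using assms finite_subset by blast
  define x where "x = splice D w e"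
  define R where "R = infsum (\<lambda>V. Phi V x) (Aset D - Aset L)"
  have t1: "gibbs_spec Phi D (splice L xi w) e = exp (- hamiltonian Phi L (splice L xi x)) * exp (- R) / Zf D e" for xi
    using ham_split[OF assms, of "splice L xi x"] R_indep[OF assms(2), of xi x]
    by (simp add: gibbs_eq[OF assms(1)] splice_splice1[OF assms(2)] x_def R_def exp_add[symmetric])
  have t2: "gibbs_spec Phi L w (splice D w e) = exp (- hamiltonian Phi L x) / Zf L x"
    by (simp add: gibbs_eq[OF fL] splice_splice2[OF assms(2)] x_def)
  have "(\<Sum>xi\<in>PiE L (\<lambda>_. UNIV). gibbs_spec Phi D (splice L xi w) e * gibbs_spec Phi L w (splice D w e))
      = (\<Sum>xi\<in>PiE L (\<lambda>_. UNIV). exp (- hamiltonian Phi L (splice L xi x))) * (exp (- R) / Zf D e * (exp (- hamiltonian Phi L x) / Zf L x))"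
    unfolding t1 t2 sum_distrib_right by (rule sum.cong) auto
  also have "\<dots> = exp (- R) * exp (- hamiltonian Phi L x) / Zf D e"
    using Zf_pos[OF fL, of x] by (simp add: Zf_def[of L x] field_simps)
  also have "\<dots> = gibbs_spec Phi D w e"
    using ham_split[OF assms, of x] by (simp add: gibbs_eq[OF assms(1)] x_def R_def exp_add[symmetric])
  finally show ?thesis by simp
qed

lemma gibbs_is_spec: "is_spec (gibbs_spec Phi)"
  unfolding is_spec_def
proof (intro conjI allI impI)
  fix L :: "int set" and w e assume "infinite L"
  then show "gibbs_spec Phi L w e = 0" by (simp add: gibbs_spec_def)
next
  fix L :: "int set" and w w' e e' :: "int \<Rightarrow> 'e"
  assume "finite L" "\<forall>j\<in>L. w j = w' j" "\<forall>j. j \<notin> L \<longrightarrow> e j = e' j"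
  then have "splice L w e = splice L w' e'" "\<And>xi. splice L xi e = splice L xi e'"
    by (auto simp: splice_def fun_eq_iff)
  then show "gibbs_spec Phi L w e = gibbs_spec Phi L w' e'" by (simp add: gibbs_spec_def)
next
  fix L :: "int set" and w e assume "finite L"
  then show "gibbs_spec Phi L w e \<ge> 0" using gibbs_pos less_imp_le by blast
next
  fix L :: "int set" and e assume f: "finite L"
  have "(\<Sum>xi\<in>PiE L (\<lambda>_. UNIV). gibbs_spec Phi L xi e) = (\<Sum>xi\<in>PiE L (\<lambda>_. UNIV). exp (- hamiltonian Phi L (splice L xi e)) / Zf L e)"
    by (rule sum.cong) (simp_all add: gibbs_eq[OF f])
  also have "\<dots> = Zf L e / Zf L e"
    unfolding Zf_def by (rule sum_divide_distrib[symmetric])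
  finally have "(\<Sum>xi\<in>PiE L (\<lambda>_. UNIV). gibbs_spec Phi L xi e) = Zf L e / Zf L e" .
  then show "(\<Sum>xi\<in>PiE L (\<lambda>_. UNIV). gibbs_spec Phi L xi e) = 1" using Zf_pos[OF f, of e] by simp
next
  fix L D :: "int set" and w e assume "finite D" "L \<subseteq> D"
  then show "gibbs_spec Phi D w e = (\<Sum>xi\<in>PiE L (\<lambda>_. UNIV). gibbs_spec Phi D (splice L xi w) e * gibbs_spec Phi L w (splice D w e))"
    by (rule gibbs_consistent)
qed

lemma gibbs_nonnull: "nonnull_spec (gibbs_spec Phi)"
  using gibbs_pos by (simp add: nonnull_spec_def)

lemma gibbs_quasilocal: "quasilocal_spec (gibbs_spec Phi)"
  unfolding quasilocal_spec_def
proof (intro allI impI)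
  fix L :: "int set" and w assume f: "finite L"
  have c: "continuous_map prodtop euclideanreal (\<lambda>e. hamiltonian Phi L (splice L xi e))" for xi
  proof (rule cont_approx)
    fix \<epsilon> :: real assume "\<epsilon> > 0"
    then obtain N where "finite N" "\<forall>x y. (\<forall>i\<in>N. x i = y i) \<longrightarrow> \<bar>hamiltonian Phi L x - hamiltonian Phi L y\<bar> \<le> \<epsilon>"
      using ham_approx[OF f] by blast
    then show "\<exists>N. finite N \<and> (\<forall>x y. (\<forall>i\<in>N. x i = y i) \<longrightarrow> \<bar>hamiltonian Phi L (splice L xi x) - hamiltonian Phi L (splice L xi y)\<bar> \<le> \<epsilon>)"
      by (intro exI[of _ N]) (auto simp: splice_def)
  qed
  have ce: "continuous_map prodtop euclideanreal (\<lambda>e. exp (- hamiltonian Phi L (splice L xi e)))" for xi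
    using c[of xi] unfolding continuous_map_atin limitin_canonical_iff
    by (auto intro!: tendsto_intros)
  show "continuous_map prodtop euclideanreal (\<lambda>e. gibbs_spec Phi L w e)"
    unfolding gibbs_eq[OF f] Zf_def
    apply (intro continuous_map_real_divide ce continuous_map_sum)
      apply (auto simp: finite_PiE f intro!: ce)
    by (metis Zf_pos[OF f] Zf_def less_irrefl)
qed


lemma Aset_shift:
  assumes "finite L"
  shows "Aset ((\<lambda>i. i + k) ` L) = (\<lambda>V. (\<lambda>i. i + k) ` V) ` Aset L"
proof (intro equalityI subsetI)
  fix W assume W: "W \<in> Aset ((\<lambda>i. i + k) ` L)"
  have "W = (\<lambda>i. i + k) ` ((\<lambda>i. i - k) ` W)" by (auto simp: image_iff)
  moreover have "(\<lambda>i. i - k) ` W \<in> Aset L" using W by (force simp: Aset_def)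
  ultimately show "W \<in> (\<lambda>V. (\<lambda>i. i + k) ` V) ` Aset L" by blast
qed (auto simp: Aset_def)

lemma ham_shift:
  assumes "finite L"
  shows "hamiltonian Phi ((\<lambda>i. i + k) ` L) x = hamiltonian Phi L (shiftZ k x)"
proof -
  have inj: "inj_on (\<lambda>V. (\<lambda>i. i + k) ` V) (Aset L)"
    by (rule inj_onI) (metis add_right_imp_eq inj_image_eq_iff inj_onI)
  show ?thesis
    unfolding ham_eq Aset_shift[OF assms] infsum_reindex[OF inj]
    by (rule infsum_cong) (simp add: Phi_shift Aset_def)
qed

lemma shift_splice: "shiftZ k (splice ((\<lambda>i. i + k) ` L) w e) = splice L (shiftZ k w) (shiftZ k e)"
  by (auto simp: shiftZ_def splice_def fun_eq_iff)

lemma Zf_shift: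
  assumes "finite L"
  shows "Zf ((\<lambda>i. i + k) ` L) e = Zf L (shiftZ k e)"
proof -
  have "Zf ((\<lambda>i. i + k) ` L) e = (\<Sum>xi\<in>PiE ((\<lambda>i. i + k) ` L) (\<lambda>_. UNIV). exp (- hamiltonian Phi L (splice L (shiftZ k xi) (shiftZ k e))))"
    unfolding Zf_def using assms by (simp add: ham_shift shift_splice)
  also have "\<dots> = Zf L (shiftZ k e)"
    unfolding Zf_def
  proof (rule sum.reindex_bij_witness[where j = "\<lambda>xi. restrict (shiftZ k xi) L"
        and i = "\<lambda>eta. restrict (shiftZ (-k) eta) ((\<lambda>i. i + k) ` L)"])
    fix a :: "int \<Rightarrow> 'e" assume a: "a \<in> PiE ((\<lambda>i. i + k) ` L) (\<lambda>_. UNIV)"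
    show "restrict (shiftZ (- k) (restrict (shiftZ k a) L)) ((\<lambda>i. i + k) ` L) = a"
      using a by (auto simp: fun_eq_iff shiftZ_def restrict_def PiE_def extensional_def)
    show "restrict (shiftZ k a) L \<in> PiE L (\<lambda>_. UNIV)" by auto
    show "exp (- hamiltonian Phi L (splice L (restrict (shiftZ k a) L) (shiftZ k e))) =
          exp (- hamiltonian Phi L (splice L (shiftZ k a) (shiftZ k e)))" by simp
  next
    fix b :: "int \<Rightarrow> 'e" assume b: "b \<in> PiE L (\<lambda>_. UNIV)"
    show "restrict (shiftZ k (restrict (shiftZ (- k) b) ((\<lambda>i. i + k) ` L))) L = b"
      using b by (auto simp: fun_eq_iff shiftZ_def restrict_def PiE_def extensional_def)
    show "restrict (shiftZ (- k) b) ((\<lambda>i. i + k) ` L) \<in> PiE ((\<lambda>i. i + k) ` L) (\<lambda>_. UNIV)" by auto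
  qed
  finally show ?thesis .
qed

lemma gibbs_trans_inv: "trans_inv_spec (gibbs_spec Phi)"
  unfolding trans_inv_spec_def
proof (intro allI impI)
  fix L :: "int set" and k and w e :: "int \<Rightarrow> 'e" assume f: "finite L"
  have f2: "finite ((\<lambda>i. i + k) ` L)" using f by simp
  show "gibbs_spec Phi ((\<lambda>i. i + k) ` L) w e = gibbs_spec Phi L (shiftZ k w) (shiftZ k e)"
    unfolding gibbs_eq[OF f] gibbs_eq[OF f2] Zf_shift[OF f] ham_shift[OF f] shift_splice ..
qed

end

lemma spec_unique:
  fixes g1 g2 :: "int set \<Rightarrow> (int \<Rightarrow> 'e) \<Rightarrow> (int \<Rightarrow> 'e) \<Rightarrow> real"
  assumes s1: "is_spec g1" and s2: "is_spec g2" and n1: "nonnull_spec g1" and n2: "nonnull_spec g2"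
    and single: "\<And>i w e. g1 {i} w e = g2 {i} w e"
  shows "g1 = g2"
proof (intro ext)
  fix D :: "int set" and w e :: "int \<Rightarrow> 'e"
  show "g1 D w e = g2 D w e"
  proof (cases "finite D")
    case False then show ?thesis using s1 s2 by (simp add: is_spec_def)
  next
    case fD: True
    have dec: "g D w e = (\<Sum>xi\<in>PiE {j} (\<lambda>_. UNIV). g D (splice {j} xi w) e) * g {j} w (splice D w e)"
      if "is_spec g" "j \<in> D" for g :: "int set \<Rightarrow> (int \<Rightarrow> 'e) \<Rightarrow> (int \<Rightarrow> 'e) \<Rightarrow> real" and j w
      using that fD unfolding is_spec_def sum_distrib_right by (meson empty_subsetI insert_subset)
    have Ainv: "(\<Sum>xi\<in>PiE {j} (\<lambda>_. UNIV). g D (splice {j} xi (w(j := s))) e) = (\<Sum>xi\<in>PiE {j} (\<lambda>_. UNIV). g D (splice {j} xi w) e)"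
      for g :: "int set \<Rightarrow> (int \<Rightarrow> 'e) \<Rightarrow> (int \<Rightarrow> 'e) \<Rightarrow> real" and j w s
    proof -
      have "splice {j} xi (w(j := s)) = splice {j} xi w" for xi :: "int \<Rightarrow> 'e"
        by (auto simp: splice_def fun_eq_iff)
      then show ?thesis by simp
    qed
    define r where "r w = g1 D w e / g2 D w e" for w
    have pos1: "g1 D w e > 0" for w using n1 fD by (simp add: nonnull_spec_def)
    have pos2: "g2 D w e > 0" for w using n2 fD by (simp add: nonnull_spec_def)
    have possing: "g2 {j} w e > 0" for j w e using n2 by (simp add: nonnull_spec_def)
    have rA: "r w = (\<Sum>xi\<in>PiE {j} (\<lambda>_. UNIV). g1 D (splice {j} xi w) e) / (\<Sum>xi\<in>PiE {j} (\<lambda>_. UNIV). g2 D (splice {j} xi w) e)"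
      if "j \<in> D" for j w
      unfolding r_def dec[OF s1 that, of w] dec[OF s2 that, of w] single
      using possing[of j w "splice D w e"] by simp
    have step: "r (w(j := s)) = r w" if "j \<in> D" for j w s
      unfolding rA[OF that] Ainv ..
    have chain: "F \<subseteq> D \<Longrightarrow> r (splice F w' w) = r w" if "finite F" for F w'
      using that
    proof (induction F rule: finite_induct)
      case empty then show ?case by (simp add: splice_def)
    next
      case (insert j F)
      have "splice (insert j F) w' w = (splice F w' w)(j := w' j)"
        by (auto simp: splice_def fun_eq_iff)
      then show ?case using insert step[of j "splice F w' w" "w' j"] by (simp del: fun_upd_apply)
    qed
    have loc: "r (splice D w' w) = r w'" for w'
    proof -
      have h: "g D (splice D w' w) e = g D w' e" if "is_spec g" for g :: "int set \<Rightarrow> (int \<Rightarrow> 'e) \<Rightarrow> (int \<Rightarrow> 'e) \<Rightarrow> real"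
        using that fD unfolding is_spec_def by (auto simp: splice_def)
      show ?thesis unfolding r_def using h[OF s1] h[OF s2] by simp
    qed
    have const: "r w' = r w" for w'
      using chain[OF fD order_refl, of w'] loc[of w'] by simp
    have eq: "g1 D w' e = r w * g2 D w' e" for w'
      using const[of w'] pos2[of w'] unfolding r_def by (simp add: field_simps)
    have "1 = (\<Sum>xi\<in>PiE D (\<lambda>_. UNIV). g1 D xi e)" using s1 fD by (simp add: is_spec_def)
    also have "\<dots> = r w * (\<Sum>xi\<in>PiE D (\<lambda>_. UNIV). g2 D xi e)" by (simp add: eq sum_distrib_left)
    also have "\<dots> = r w" using s2 fD by (simp add: is_spec_def)
    finally have "r w = 1" by simp
    then show ?thesis using eq[of w] by simp
  qed
qed


lemma infsum_diff':
  fixes f g :: "'a \<Rightarrow> real"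
  assumes "f summable_on A" "g summable_on A"
  shows "infsum (\<lambda>x. f x - g x) A = infsum f A - infsum g A"
proof -
  have "infsum (\<lambda>x. f x + (- g x)) A = infsum f A + infsum (\<lambda>x. - g x) A"
    by (rule infsum_add) (use assms summable_on_uminus in auto)
  then show ?thesis by (simp add: infsum_uminus)
qed

lemma summable_diff':
  fixes f g :: "'a \<Rightarrow> real"
  assumes "f summable_on A" "g summable_on A"
  shows "(\<lambda>x. f x - g x) summable_on A"
proof -
  have "(\<lambda>x. f x + (- g x)) summable_on A"
    by (rule summable_on_add) (use assms summable_on_uminus in auto)
  then show ?thesis by simp
qed

definition Pm :: "int \<Rightarrow> int set set" where
  "Pm m = {W. finite W \<and> m \<in> W \<and> W \<subseteq> {m..}}"

context gs
begin

lemma tail_n: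
  assumes "finite L" "\<epsilon> > 0"
  shows "\<exists>N. \<forall>n\<ge>N. \<forall>B. B \<subseteq> Aset L \<and> (\<forall>W\<in>B. \<not> W \<subseteq> {- int n..}) \<longrightarrow> infsum (\<lambda>V. supnorm (Phi V)) B \<le> \<epsilon>"
proof -
  obtain F where F: "finite F" "F \<subseteq> Aset L" "\<And>B. B \<subseteq> Aset L - F \<Longrightarrow> infsum (\<lambda>V. supnorm (Phi V)) B \<le> \<epsilon>"
    using tail_approx[OF summable_sup[OF assms(1)] _ assms(2)] supnorm_nonneg
    by (auto simp: Aset_def)
  have fU: "finite (\<Union>F \<union> {0})" using F by (auto simp: Aset_def)
  define N where "N = nat (Max ((\<lambda>j. - j) ` (\<Union>F \<union> {0})))"
  have b: "j \<ge> - int N" if "j \<in> \<Union>F" for j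
  proof -
    have "- j \<le> Max ((\<lambda>j. - j) ` (\<Union>F \<union> {0}))" using fU that by (intro Max_ge) auto
    then show ?thesis unfolding N_def by linarith
  qed
  show ?thesis
  proof (intro exI[of _ N] allI impI)
    fix n B assume n: "n \<ge> N" and B: "B \<subseteq> Aset L \<and> (\<forall>W\<in>B. \<not> W \<subseteq> {- int n..})"
    have "B \<subseteq> Aset L - F"
    proof
      fix W assume "W \<in> B"
      moreover have "W \<notin> F"
      proof
        assume "W \<in> F"
        then have "W \<subseteq> {- int n..}" using b n by fastforce
        then show False using B \<open>W \<in> B\<close> by blast
      qed
      ultimately show "W \<in> Aset L - F" using B by blast
    qed
    then show "infsum (\<lambda>V. supnorm (Phi V)) B \<le> \<epsilon>" by (rule F(3))
  qed
qed

lemma summable_D: "finite L \<Longrightarrow> B \<subseteq> Aset L \<Longrightarrow> (\<lambda>V. Phi V x - Phi V y) summable_on B"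
  by (intro summable_diff' summable_Phi)

end

locale gsphi = gs Phi for Phi :: "int set \<Rightarrow> (int \<Rightarrow> 'e::finite) \<Rightarrow> real" +
  fixes phi :: "(nat \<Rightarrow> 'e) \<Rightarrow> real"
  assumes phi_def: "\<And>x. phi x = - (\<Sum>\<^sub>\<infinity>V\<in>{V. finite V \<and> 0 \<in> V \<and> V \<subseteq> {0..}}. Phi V (\<lambda>i. x (nat i)))"
begin

lemma Pm_image: "Pm m = (\<lambda>V. (\<lambda>i. i + m) ` V) ` Pm 0"
proof (intro equalityI subsetI)
  fix W assume W: "W \<in> Pm m"
  have "W = (\<lambda>i. i + m) ` ((\<lambda>i. i - m) ` W)" by (auto simp: image_iff)
  moreover have "(\<lambda>i. i - m) ` W \<in> Pm 0" using W by (force simp: Pm_def)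
  ultimately show "W \<in> (\<lambda>V. (\<lambda>i. i + m) ` V) ` Pm 0" by blast
qed (auto simp: Pm_def)

lemma phi_shift: "phi (\<lambda>n. x (int n + m)) = - infsum (\<lambda>W. Phi W x) (Pm m)"
proof -
  have inj: "inj_on (\<lambda>V. (\<lambda>i. i + m) ` V) (Pm 0)"
    by (rule inj_onI) (metis add_right_imp_eq inj_image_eq_iff inj_onI)
  have "infsum (\<lambda>W. Phi W x) (Pm m) = infsum (\<lambda>V. Phi V (\<lambda>i. x (int (nat i) + m))) (Pm 0)"
    unfolding Pm_image[of m] infsum_reindex[OF inj] o_def
  proof (rule infsum_cong)
    fix V assume V: "V \<in> Pm 0"
    then have "Phi ((\<lambda>i. i + m) ` V) x = Phi V (shiftZ m x)" by (simp add: Phi_shift Pm_def)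
    also have "\<dots> = Phi V (\<lambda>i. x (int (nat i) + m))"
      by (rule Phi_cong) (use V in \<open>auto simp: Pm_def shiftZ_def\<close>)
    finally show "Phi ((\<lambda>i. i + m) ` V) x = Phi V (\<lambda>i. x (int (nat i) + m))" .
  qed
  then show ?thesis by (simp add: phi_def Pm_def)
qed

lemma Pm_sub: "Pm m \<subseteq> Aset {m}"
  by (auto simp: Pm_def Aset_def)


lemma ins_str_eq: "ins_str x i a = (\<lambda>n. (x(0 := a)) (int n + - int i))"
  by (auto simp: ins_str_def fun_eq_iff)

lemma extensible_phi: "extensible phi"
  unfolding extensible_def
proof (intro allI)
  fix a0 b0 :: 'e
  define D where "D x W = Phi W (x(0 := a0)) - Phi W (x(0 := b0))" for x W
  define C where "C n = {W. finite W \<and> 0 \<in> W \<and> W \<subseteq> {- int n..}}" for n :: nat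
  have C_sub: "C n \<subseteq> Aset {0}" for n by (auto simp: C_def Aset_def)
  have sD: "B \<subseteq> Aset {0} \<Longrightarrow> D x summable_on B" for B x
    unfolding D_def by (rule summable_D) auto
  have trm: "phi (ins_str x i b0) - phi (ins_str x i a0) = infsum (D x) (Pm (- int i) \<inter> Aset {0})" for x i
  proof -
    have "phi (ins_str x i b0) - phi (ins_str x i a0) = infsum (D x) (Pm (- int i))"
      unfolding ins_str_eq phi_shift D_def
      by (subst infsum_diff') (use Pm_sub in \<open>auto intro!: summable_Phi[of "{- int i}"]\<close>)
    also have "\<dots> = infsum (D x) (Pm (- int i) \<inter> Aset {0})"
      by (rule infsum_cong_neutral) (auto simp: D_def Aset_def Pm_def intro!: Phi_cong)
    finally show ?thesis .
  qed
  have part: "(\<Sum>i\<le>n. infsum (D x) (Pm (- int i) \<inter> Aset {0})) = infsum (D x) (C n)" for x n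
  proof (induction n)
    case 0
    have "Pm 0 \<inter> Aset {0} = C 0" by (auto simp: Pm_def Aset_def C_def)
    then show ?case by simp
  next
    case (Suc n)
    have eq: "C (Suc n) = C n \<union> (Pm (- int (Suc n)) \<inter> Aset {0})"
    proof (intro equalityI subsetI)
      fix W assume W: "W \<in> C (Suc n)"
      show "W \<in> C n \<union> (Pm (- int (Suc n)) \<inter> Aset {0})"
      proof (cases "W \<subseteq> {- int n..}")
        case True then show ?thesis using W by (auto simp: C_def)
      next
        case False
        then obtain j where "j \<in> W" "j < - int n" by (meson atLeast_iff not_le subsetI)
        moreover have "j \<ge> - int (Suc n)" using W \<open>j \<in> W\<close> by (auto simp: C_def)
        ultimately have "j = - int (Suc n)" by linarith
        then show ?thesis using W \<open>j \<in> W\<close> by (auto simp: C_def Pm_def Aset_def)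
      qed
    qed (auto simp: C_def Pm_def Aset_def)
    have disj: "C n \<inter> (Pm (- int (Suc n)) \<inter> Aset {0}) = {}"
      by (auto simp: C_def Pm_def)
    show ?case
      unfolding sum.atMost_Suc Suc eq
      by (subst infsum_Un_disjoint) (use disj C_sub in \<open>auto intro!: sD\<close>)
  qed
  show "uniformly_convergent_on UNIV (\<lambda>n x. \<Sum>i\<le>n. phi (ins_str x i b0) - phi (ins_str x i a0))"
    unfolding uniformly_convergent_on_def
  proof (intro exI uniform_limitI)
    fix \<epsilon> :: real assume e: "\<epsilon> > 0"
    obtain N where N: "\<And>n B. n \<ge> N \<Longrightarrow> B \<subseteq> Aset {0} \<Longrightarrow> (\<forall>W\<in>B. \<not> W \<subseteq> {- int n..}) \<Longrightarrow>
        infsum (\<lambda>V. supnorm (Phi V)) B \<le> \<epsilon>/3"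
      using tail_n[of "{0}" "\<epsilon>/3"] e by (metis divide_pos_pos finite.emptyI finite_insert zero_less_numeral)
    show "\<forall>\<^sub>F n in sequentially. \<forall>x\<in>UNIV. dist (\<Sum>i\<le>n. phi (ins_str x i b0) - phi (ins_str x i a0)) (infsum (D x) (Aset {0})) < \<epsilon>"
    proof (rule eventually_sequentiallyI[of N], intro ballI)
      fix n x assume n: "n \<ge> N"
      define B where "B = Aset {0} - C n"
      have Bsub: "B \<subseteq> Aset {0}" by (auto simp: B_def)
      have Bt: "\<forall>W\<in>B. \<not> W \<subseteq> {- int n..}" by (auto simp: B_def C_def Aset_def)
      have "infsum (D x) (Aset {0}) = infsum (D x) (C n \<union> B)"
        using C_sub[of n] by (simp add: B_def Un_absorb1)
      also have "\<dots> = infsum (D x) (C n) + infsum (D x) B"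
        by (subst infsum_Un_disjoint) (use C_sub Bsub in \<open>auto intro!: sD simp: B_def\<close>)
      finally have eq: "infsum (D x) (Aset {0}) = infsum (D x) (C n) + infsum (D x) B" .
      have "infsum (D x) B = infsum (\<lambda>W. Phi W (x(0 := a0))) B - infsum (\<lambda>W. Phi W (x(0 := b0))) B"
        unfolding D_def by (rule infsum_diff') (use Bsub in \<open>auto intro!: summable_Phi[of "{0}"]\<close>)
      moreover have bb: "\<bar>infsum (\<lambda>W. Phi W y) B\<bar> \<le> \<epsilon>/3" for y
        using bound_Phi[of "{0}" B y] Bsub N[OF n Bsub Bt] by simp
      ultimately have "\<bar>infsum (D x) B\<bar> \<le> 2 * \<epsilon> / 3"
        using bb[of "x(0 := a0)"] bb[of "x(0 := b0)"] by linarith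
      moreover have "(\<Sum>i\<le>n. phi (ins_str x i b0) - phi (ins_str x i a0)) = infsum (D x) (C n)"
        unfolding trm part ..
      ultimately show "dist (\<Sum>i\<le>n. phi (ins_str x i b0) - phi (ins_str x i a0)) (infsum (D x) (Aset {0})) < \<epsilon>"
        using eq e by (simp add: dist_real_def)
    qed
  qed
qed


end



lemma bij_single: "bij_betw (\<lambda>xi. xi i) (PiE {i} (\<lambda>_. UNIV)) (UNIV :: 'e set)"
proof (rule bij_betw_byWitness[where f' = "\<lambda>s. (\<lambda>_. undefined)(i := s)"])
  show "\<forall>a\<in>PiE {i} (\<lambda>_. UNIV). (\<lambda>_. undefined)(i := a i) = (a :: _ \<Rightarrow> 'e)"
  proof
    fix a :: "'a \<Rightarrow> 'e" assume a: "a \<in> PiE {i} (\<lambda>_. UNIV)"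
    show "(\<lambda>_. undefined)(i := a i) = a"
    proof (rule ext)
      fix x show "((\<lambda>_. undefined)(i := a i)) x = a x"
        using a by (cases "x = i") (auto simp: PiE_def extensional_def)
    qed
  qed
  show "(\<lambda>s. (\<lambda>_. undefined)(i := s)) ` UNIV \<subseteq> PiE {i} (\<lambda>_. UNIV)"
    by (auto simp: PiE_def extensional_def)
qed auto

context gsphi begin
definition Qs :: "int \<Rightarrow> nat \<Rightarrow> int set set" where
  "Qs a n = {W. finite W \<and> W \<subseteq> {a..} \<and> (\<exists>j\<in>W. j < a + int n)}"

lemma Qsum: "(\<Sum>k<n. infsum (\<lambda>W. Phi W x) (Pm (a + int k))) = infsum (\<lambda>W. Phi W x) (Qs a n)"
proof (induction n)
  case 0
  have "Qs a 0 = {}" by (auto simp: Qs_def)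
  then show ?case by simp
next
  case (Suc n)
  have eq: "Qs a (Suc n) = Qs a n \<union> Pm (a + int n)"
  proof (intro equalityI subsetI)
    fix W assume W: "W \<in> Qs a (Suc n)"
    show "W \<in> Qs a n \<union> Pm (a + int n)"
    proof (cases "\<exists>j\<in>W. j < a + int n")
      case True then show ?thesis using W by (auto simp: Qs_def)
    next
      case False
      obtain j where j: "j \<in> W" "j < a + int (Suc n)" using W by (auto simp: Qs_def)
      have "\<not> j < a + int n" using False j(1) by blast
      then have "j = a + int n" using j(2) by simp
      then show ?thesis using W False \<open>j \<in> W\<close> by (force simp: Qs_def Pm_def)
    qed
  next
    fix W assume "W \<in> Qs a n \<union> Pm (a + int n)"
    then show "W \<in> Qs a (Suc n)" unfolding Qs_def Pm_def
      by (auto; force)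
  qed
  have disj: "Qs a n \<inter> Pm (a + int n) = {}" by (auto simp: Qs_def Pm_def)
  have s1: "Qs a n \<subseteq> Aset {a..<a + int n}" by (force simp: Qs_def Aset_def)
  have s2: "(\<lambda>W. Phi W x) summable_on Pm (a + int n)" by (rule summable_Phi[OF _ Pm_sub]) simp
  have s1': "(\<lambda>W. Phi W x) summable_on Qs a n" by (rule summable_Phi[OF _ s1]) simp
  show ?case
    unfolding sum.lessThan_Suc Suc eq infsum_Un_disjoint[OF s1' s2 disj] ..
qed

lemma kernel_lim: "(ss_approx phi i (w i) e \<longlonglongrightarrow> gibbs_spec Phi {i} w e)"
proof -
  define xs where "xs s = e(i := s)" for s
  define Tp where "Tp p = {W. finite W \<and> W \<subseteq> {- int p..} \<and> i \<in> W}" for p :: nat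
  define t where "t s p = infsum (\<lambda>W. Phi W (xs s)) (Tp p)" for s p
  define h where "h s = infsum (\<lambda>W. Phi W (xs s)) (Aset {i})" for s
  have Tp_sub: "Tp p \<subseteq> Aset {i}" for p by (auto simp: Tp_def Aset_def)
  have eqp: "ss_approx phi i s e p = exp (- t s p) / (\<Sum>s'\<in>UNIV. exp (- t s' p))"
    if p: "- int p \<le> i" for p s
  proof -
    define n where "n = nat (i + int p + 1)"
    have n: "int n = i + int p + 1" using p by (simp add: n_def)
    define Q where "Q = Qs (- int p) n"
    define R where "R = infsum (\<lambda>W. Phi W e) (Q - Tp p)"
    have Qsub: "Q \<subseteq> Aset {- int p..<- int p + int n}" by (force simp: Q_def Qs_def Aset_def)
    have TQ: "Tp p \<subseteq> Q" using n by (auto simp: Tp_def Q_def Qs_def)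
    have S: "Ssum phi n (window (xs s') p) = - (t s' p + R)" for s'
    proof -
      have "Ssum phi n (window (xs s') p) = (\<Sum>k<n. - infsum (\<lambda>W. Phi W (xs s')) (Pm (- int p + int k)))"
        unfolding Ssum_def
      proof (rule sum.cong[OF refl])
        fix k assume "k \<in> {..<n}"
        have "shiftN k (window (xs s') p) = (\<lambda>m. xs s' (int m + (- int p + int k)))"
          by (auto simp: shiftN_def window_def fun_eq_iff algebra_simps)
        then show "phi (shiftN k (window (xs s') p)) = - infsum (\<lambda>W. Phi W (xs s')) (Pm (- int p + int k))"
          by (simp add: phi_shift)
      qed
      also have "\<dots> = - infsum (\<lambda>W. Phi W (xs s')) Q"
        unfolding sum_negf Qsum Q_def ..
      also have "infsum (\<lambda>W. Phi W (xs s')) Q = infsum (\<lambda>W. Phi W (xs s')) (Tp p \<union> (Q - Tp p))"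
        using TQ by (simp add: Un_absorb1)
      also have "\<dots> = t s' p + infsum (\<lambda>W. Phi W (xs s')) (Q - Tp p)"
        unfolding t_def
        by (subst infsum_Un_disjoint) (use Qsub TQ in \<open>auto intro!: summable_Phi[of "{- int p..<- int p + int n}"]\<close>)
      also have "infsum (\<lambda>W. Phi W (xs s')) (Q - Tp p) = R"
        unfolding R_def
        by (rule infsum_cong, rule Phi_cong) (use TQ in \<open>auto simp: Q_def Qs_def Tp_def xs_def\<close>)
      finally show ?thesis .
    qed
    have S': "Ssum phi n (window (e(i := s')) p) = - (t s' p + R)" for s'
      using S[of s'] by (simp only: xs_def)
    have ex: "exp (- (t s' p + R)) = exp (- t s' p) * exp (- R)" for s'
      by (simp add: exp_add[symmetric])
    have "ss_approx phi i s e p = exp (- t s p) * exp (- R) / ((\<Sum>s'\<in>UNIV. exp (- t s' p)) * exp (- R))"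
      unfolding ss_approx_def n_def[symmetric] S' ex sum_distrib_right ..
    also have "\<dots> = exp (- t s p) / (\<Sum>s'\<in>UNIV. exp (- t s' p))" by simp
    finally show ?thesis .
  qed
  have tlim: "(t s \<longlonglongrightarrow> h s)" for s
  proof (rule LIMSEQ_I)
    fix r :: real assume r: "r > 0"
    obtain N where N: "\<And>n B. n \<ge> N \<Longrightarrow> B \<subseteq> Aset {i} \<Longrightarrow> (\<forall>W\<in>B. \<not> W \<subseteq> {- int n..}) \<Longrightarrow>
        infsum (\<lambda>V. supnorm (Phi V)) B \<le> r/2"
      using tail_n[of "{i}" "r/2"] r by (metis divide_pos_pos finite.emptyI finite_insert zero_less_numeral)
    show "\<exists>no. \<forall>n\<ge>no. norm (t s n - h s) < r"
    proof (intro exI allI impI)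
      fix n assume n: "n \<ge> N"
      define B where "B = Aset {i} - Tp n"
      have "h s = infsum (\<lambda>W. Phi W (xs s)) (Tp n \<union> B)"
        using Tp_sub[of n] by (simp add: h_def B_def Un_absorb1)
      also have "\<dots> = t s n + infsum (\<lambda>W. Phi W (xs s)) B"
        unfolding t_def
        by (subst infsum_Un_disjoint) (use Tp_sub in \<open>auto intro!: summable_Phi[of "{i}"] simp: B_def\<close>)
      finally have "h s = t s n + infsum (\<lambda>W. Phi W (xs s)) B" .
      moreover have Bsub: "B \<subseteq> Aset {i}" by (auto simp: B_def)
      moreover have Bt: "\<forall>W\<in>B. \<not> W \<subseteq> {- int n..}" by (auto simp: B_def Tp_def Aset_def)
      ultimately have "\<bar>infsum (\<lambda>W. Phi W (xs s)) B\<bar> \<le> r/2"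
        using bound_Phi[OF _ Bsub, of "xs s"] N[OF n Bsub Bt] by simp
      then show "norm (t s n - h s) < r" using r \<open>h s = t s n + infsum (\<lambda>W. Phi W (xs s)) B\<close> by simp
    qed
  qed
  have lim2: "(\<lambda>p. exp (- t (w i) p) / (\<Sum>s'\<in>UNIV. exp (- t s' p))) \<longlonglongrightarrow> exp (- h (w i)) / (\<Sum>s'\<in>UNIV. exp (- h s'))"
  proof -
    have "(\<Sum>s'\<in>UNIV. exp (- h s')) > 0" by (rule sum_pos) auto
    then show ?thesis
      by (intro tendsto_divide tendsto_exp tendsto_minus tendsto_sum tlim) auto
  qed
  have ev: "\<forall>\<^sub>F p in sequentially. exp (- t (w i) p) / (\<Sum>s'\<in>UNIV. exp (- t s' p)) = ss_approx phi i (w i) e p"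
    by (rule eventually_sequentiallyI[of "nat (- i)"]) (simp add: eqp)
  have "gibbs_spec Phi {i} w e = exp (- h (w i)) / (\<Sum>s'\<in>UNIV. exp (- h s'))"
  proof -
    have sp: "splice {i} xi e = xs (xi i)" for xi :: "int \<Rightarrow> 'e"
      by (auto simp: splice_def xs_def fun_eq_iff)
    have bij: "bij_betw (\<lambda>xi. xi i) (PiE {i} (\<lambda>_. UNIV)) (UNIV :: 'e set)"
      by (rule bij_single)
    have "Zf {i} e = (\<Sum>xi\<in>PiE {i} (\<lambda>_. UNIV). exp (- h (xi i)))"
      unfolding Zf_def sp ham_eq h_def ..
    also have "\<dots> = (\<Sum>s'\<in>UNIV. exp (- h s'))"
      by (rule sum.reindex_bij_betw[OF bij])
    finally have Z: "Zf {i} e = (\<Sum>s'\<in>UNIV. exp (- h s'))" .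
    show ?thesis unfolding gibbs_eq[of "{i}", simplified] Z sp ham_eq h_def ..
  qed
  then show ?thesis using Lim_transform_eventually[OF lim2 ev] by (simp only:)
qed

end



theorem mainTheorem5:
  fixes phi :: "(nat \<Rightarrow> 'e::finite) \<Rightarrow> real"
    and Phi :: "int set \<Rightarrow> (int \<Rightarrow> 'e) \<Rightarrow> real"
  assumes "continuous_map prodtop_pos euclideanreal phi"
    and "is_interaction Phi" and "uac Phi" and "trans_inv_interaction Phi"
    and "\<And>x. phi x = - (\<Sum>\<^sub>\<infinity>V\<in>{V. finite V \<and> 0 \<in> V \<and> V \<subseteq> {0..}}. Phi V (\<lambda>i. x (nat i)))"
  shows "extensible phi \<and> rev_spec phi = gibbs_spec Phi"
proof -
  interpret gsphi Phi phi
    by unfold_locales (use assms in auto)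
  have "rev_spec phi = gibbs_spec Phi"
    unfolding rev_spec_def
  proof (rule the_equality)
    show "is_spec (gibbs_spec Phi) \<and> quasilocal_spec (gibbs_spec Phi) \<and> nonnull_spec (gibbs_spec Phi) \<and>
      trans_inv_spec (gibbs_spec Phi) \<and> (\<forall>i w e. (ss_approx phi i (w i) e \<longlongrightarrow> gibbs_spec Phi {i} w e) sequentially)"
      using gibbs_is_spec gibbs_quasilocal gibbs_nonnull gibbs_trans_inv kernel_lim by blast
  next
    fix gam
    assume H: "is_spec gam \<and> quasilocal_spec gam \<and> nonnull_spec gam \<and>
      trans_inv_spec gam \<and> (\<forall>i w e. (ss_approx phi i (w i) e \<longlongrightarrow> gam {i} w e) sequentially)"
    show "gam = gibbs_spec Phi"
    proof (rule spec_unique)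
      show "is_spec gam" "nonnull_spec gam" using H by auto
      show "is_spec (gibbs_spec Phi)" "nonnull_spec (gibbs_spec Phi)" by (rule gibbs_is_spec, rule gibbs_nonnull)
      fix i w e
      show "gam {i} w e = gibbs_spec Phi {i} w e"
        using H kernel_lim LIMSEQ_unique by blast
    qed
  qed
  then show ?thesis using extensible_phi by simp
qed

end
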